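(* Let $p,p_1,\dots,p_n$ be distinct propositional variables ($n\geq 1$). Then $\bigwedge_{i=1}^n([0]p_i\to p_i)\to p\ \vdash_{\mathbf{GL}}\ Q^n(p)\leftrightarrow p$, i.e. the formula $Q^n(p)\leftrightarrow p$ is derivable from the axioms of $\mathbf{GL}$ and the hypothesis $\bigwedge_{i=1}^n([0]p_i\to p_i)\to p$ using modus ponens and necessitation.
   Context: $\mathbf{GL}$ is Gödel–Löb provability logic with the single modality $[0]$: classical tautologies, $[0](\phi\to\psi)\to([0]\phi\to[0]\psi)$, $[0]([0]\phi\to\phi)\to[0]\phi$, rules modus ponens and necessitation. For a finite set $\Gamma$, $\Gamma\vdash_{\mathbf{GL}}\phi$ means $\phi$ is derivable from the axioms and $\Gamma$ by modus ponens and necessitation (necessitation may be applied to anything derived, including hypotheses). Define $Q_1(p):=p$, $Q_{i+1}(p):=p\lor[0]Q_i(p)$, and $Q^n(p):=\bigwedge_{i=1}^n([0]Q_i(p)\to Q_i(p))$. *)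

theory Defs
  imports Main
begin

text \<open>Modal formulas over propositional variables indexed by nat, with the single modality [0].\<close>
datatype fm = Var nat | Bot | Imp fm fm | Box fm

definition Neg :: "fm \<Rightarrow> fm" where "Neg a = Imp a Bot"
definition Top :: fm where "Top = Imp Bot Bot"
definition Or :: "fm \<Rightarrow> fm \<Rightarrow> fm" where "Or a b = Imp (Neg a) b"
definition And :: "fm \<Rightarrow> fm \<Rightarrow> fm" where "And a b = Neg (Imp a (Neg b))"
definition Iff :: "fm \<Rightarrow> fm \<Rightarrow> fm" where "Iff a b = And (Imp a b) (Imp b a)"

fun BigAnd :: "fm list \<Rightarrow> fm" where
  "BigAnd [] = Top"
| "BigAnd [a] = a"
| "BigAnd (a # b # xs) = And a (BigAnd (b # xs))"

fun peval :: "(nat \<Rightarrow> bool) \<Rightarrow> (fm \<Rightarrow> bool) \<Rightarrow> fm \<Rightarrow> bool" where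
  "peval v b (Var n) = v n"
| "peval v b Bot = False"
| "peval v b (Imp x y) = (peval v b x \<longrightarrow> peval v b y)"
| "peval v b (Box x) = b x"

definition tautology :: "fm \<Rightarrow> bool" where
  "tautology a \<longleftrightarrow> (\<forall>v b. peval v b a)"

text \<open>Derivability in GL from a set of hypotheses, with MP and necessitation
  applicable to everything derived (including hypotheses).\<close>
inductive GL_der :: "fm set \<Rightarrow> fm \<Rightarrow> bool" where
  taut: "tautology a \<Longrightarrow> GL_der G a"
| K: "GL_der G (Imp (Box (Imp a b)) (Imp (Box a) (Box b)))"
| Loeb: "GL_der G (Imp (Box (Imp (Box a) a)) (Box a))"
| hyp: "a \<in> G \<Longrightarrow> GL_der G a"
| MP: "GL_der G (Imp a b) \<Longrightarrow> GL_der G a \<Longrightarrow> GL_der G b"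
| Nec: "GL_der G a \<Longrightarrow> GL_der G (Box a)"

fun Q :: "nat \<Rightarrow> fm \<Rightarrow> fm" where
  "Q 0 p = p"
| "Q (Suc 0) p = p"
| "Q (Suc (Suc i)) p = Or p (Box (Q (Suc i) p))"

definition Qn :: "nat \<Rightarrow> fm \<Rightarrow> fm" where
  "Qn n p = BigAnd (map (\<lambda>i. Imp (Box (Q i p)) (Q i p)) [1..<Suc n])"

end

theory Submission
  imports Defs
begin

fun Imps :: "fm list \<Rightarrow> fm \<Rightarrow> fm" where
  "Imps [] c = c"
| "Imps (a # as) c = Imp a (Imps as c)"

lemma peval_Imps: "peval v b (Imps as c) = ((\<forall>a\<in>set as. peval v b a) \<longrightarrow> peval v b c)"
  by (induction as) auto

lemma peval_simps[simp]:
  "peval v b (Neg x) = (\<not> peval v b x)"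
  "peval v b Top = True"
  "peval v b (Or x y) = (peval v b x \<or> peval v b y)"
  "peval v b (And x y) = (peval v b x \<and> peval v b y)"
  "peval v b (Iff x y) = (peval v b x = peval v b y)"
  by (auto simp: Neg_def Top_def Or_def And_def Iff_def)

lemma peval_BigAnd[simp]: "peval v b (BigAnd xs) = (\<forall>x\<in>set xs. peval v b x)"
  by (induction xs rule: BigAnd.induct) auto

lemma imps_mp: "GL_der G (Imps Fs c) \<Longrightarrow> \<forall>f\<in>set Fs. GL_der G f \<Longrightarrow> GL_der G c"
  by (induction Fs) (auto intro: GL_der.MP)

lemma derive_taut:
  assumes "\<forall>f\<in>set Fs. GL_der G f"
    and "\<And>v b. (\<forall>f\<in>set Fs. peval v b f) \<Longrightarrow> peval v b c"
  shows "GL_der G c"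
proof -
  have "GL_der G (Imps Fs c)"
    by (rule GL_der.taut) (use assms(2) in \<open>simp add: tautology_def peval_Imps\<close>)
  then show ?thesis using assms(1) by (rule imps_mp)
qed

lemma box_mono: "GL_der G (Imp a c) \<Longrightarrow> GL_der G (Imp (Box a) (Box c))"
  by (meson GL_der.K GL_der.MP GL_der.Nec)

lemma box_imps0: "GL_der G (Imp (Box (Imps as c)) (Imps (map Box as) (Box c)))"
proof (induction as)
  case Nil
  show ?case by (rule GL_der.taut) (simp add: tautology_def)
next
  case (Cons a as)
  have k: "GL_der G (Imp (Box (Imp a (Imps as c))) (Imp (Box a) (Box (Imps as c))))"
    by (rule GL_der.K)
  show ?case
    by (rule derive_taut[where Fs="[Imp (Box (Imp a (Imps as c))) (Imp (Box a) (Box (Imps as c))),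
        Imp (Box (Imps as c)) (Imps (map Box as) (Box c))]"])
      (use k Cons in \<open>auto simp: peval_Imps\<close>)
qed

lemma box_imps: "GL_der G (Imps as c) \<Longrightarrow> GL_der G (Imps (map Box as) (Box c))"
  by (meson GL_der.MP GL_der.Nec box_imps0)

lemma four: "GL_der G (Imp (Box a) (Box (Box a)))"
proof -
  define B where "B = And a (Box a)"
  have f1: "GL_der G (Imp (Box B) (Box a))"
    by (rule box_mono, rule GL_der.taut) (simp add: tautology_def B_def)
  have f2: "GL_der G (Imp a (Imp (Box B) B))"
    by (rule derive_taut[where Fs="[Imp (Box B) (Box a)]"]) (use f1 in \<open>auto simp: B_def\<close>)
  have f3: "GL_der G (Imp (Box a) (Box (Imp (Box B) B)))" using f2 by (rule box_mono)
  have f4: "GL_der G (Imp (Box (Imp (Box B) B)) (Box B))" by (rule GL_der.Loeb)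
  have f5: "GL_der G (Imp (Box B) (Box (Box a)))"
    by (rule box_mono, rule GL_der.taut) (simp add: tautology_def B_def)
  show ?thesis
    by (rule derive_taut[where Fs="[Imp (Box a) (Box (Imp (Box B) B)), Imp (Box (Imp (Box B) B)) (Box B),
        Imp (Box B) (Box (Box a))]"]) (use f3 f4 f5 in auto)
qed

lemma claim:
  assumes H: "Imp (BigAnd (map (\<lambda>q. Imp (Box (Var q)) (Var q)) ps)) (Var p) \<in> G"
  shows "set xs \<subseteq> set ps \<Longrightarrow> card (set ps - set xs) \<le> m \<Longrightarrow>
    GL_der G (Imps (map Var xs @ map (\<lambda>j. Box (Var j)) xs) (Q (Suc m) (Var p)))"
proof (induction m arbitrary: xs)
  case 0
  have sub: "set ps \<subseteq> set xs" using 0 by auto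
  have h: "GL_der G (Imp (BigAnd (map (\<lambda>q. Imp (Box (Var q)) (Var q)) ps)) (Var p))"
    using H by (rule GL_der.hyp)
  show ?case
  proof (rule derive_taut[where Fs="[Imp (BigAnd (map (\<lambda>q. Imp (Box (Var q)) (Var q)) ps)) (Var p)]"])
    show "\<forall>f\<in>set [Imp (BigAnd (map (\<lambda>q. Imp (Box (Var q)) (Var q)) ps)) (Var p)]. GL_der G f"
      using h by simp
  next
    fix v b
    assume A: "\<forall>f\<in>set [Imp (BigAnd (map (\<lambda>q. Imp (Box (Var q)) (Var q)) ps)) (Var p)]. peval v b f"
    show "peval v b (Imps (map Var xs @ map (\<lambda>j. Box (Var j)) xs) (Q (Suc 0) (Var p)))"
      unfolding peval_Imps
    proof
      assume X: "\<forall>a\<in>set (map Var xs @ map (\<lambda>j. Box (Var j)) xs). peval v b a"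
      have "\<forall>q\<in>set ps. v q"
      proof
        fix q assume "q \<in> set ps"
        then have "q \<in> set xs" using sub by auto
        then have "Var q \<in> set (map Var xs @ map (\<lambda>j. Box (Var j)) xs)" by simp
        then show "v q" using X by fastforce
      qed
      then show "peval v b (Q (Suc 0) (Var p))" using A by auto
    qed
  qed
next
  case (Suc m)
  define BI where "BI = (\<lambda>q. Imps (map Box (map Var (q # xs) @ map (\<lambda>j. Box (Var j)) (q # xs)))
        (Box (Q (Suc m) (Var p))))"
  have ih: "GL_der G (BI q)" if "q \<in> set ps" "q \<notin> set xs" for q
  proof -
    have "card (set ps - set (q # xs)) \<le> m"
    proof -
      have "set ps - set (q # xs) = (set ps - set xs) - {q}" by auto
      moreover have "q \<in> set ps - set xs" using that by auto
      ultimately show ?thesis using Suc.prems(2)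
        using card_Suc_Diff1[of "set ps - set xs" q] by simp
    qed
    then have "GL_der G (Imps (map Var (q # xs) @ map (\<lambda>j. Box (Var j)) (q # xs)) (Q (Suc m) (Var p)))"
      using Suc.IH[of "q # xs"] Suc.prems that by auto
    then show ?thesis unfolding BI_def by (rule box_imps)
  qed
  have h: "GL_der G (Imp (BigAnd (map (\<lambda>q. Imp (Box (Var q)) (Var q)) ps)) (Var p))"
    using H by (rule GL_der.hyp)
  let ?Fs = "[Imp (BigAnd (map (\<lambda>q. Imp (Box (Var q)) (Var q)) ps)) (Var p)]
     @ map BI (filter (\<lambda>q. q \<notin> set xs) ps) @ map (\<lambda>j. Imp (Box (Var j)) (Box (Box (Var j)))) ps"
  show ?case
  proof (rule derive_taut[where Fs="?Fs"])
    show "\<forall>f\<in>set ?Fs. GL_der G f" using h ih four by auto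
  next
    fix v b
    assume A: "\<forall>f\<in>set ?Fs. peval v b f"
    show "peval v b (Imps (map Var xs @ map (\<lambda>j. Box (Var j)) xs) (Q (Suc (Suc m)) (Var p)))"
      unfolding peval_Imps
    proof
      assume X: "\<forall>a\<in>set (map Var xs @ map (\<lambda>j. Box (Var j)) xs). peval v b a"
      have XX: "\<forall>j\<in>set xs. v j \<and> b (Var j)"
      proof
        fix j assume "j \<in> set xs"
        then have "Var j \<in> set (map Var xs @ map (\<lambda>j. Box (Var j)) xs)"
          "Box (Var j) \<in> set (map Var xs @ map (\<lambda>j. Box (Var j)) xs)" by simp_all
        then show "v j \<and> b (Var j)" using X by (metis peval.simps(1) peval.simps(4))
      qed
      show "peval v b (Q (Suc (Suc m)) (Var p))"
      proof (cases "v p")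
        case True then show ?thesis by simp
      next
        case False
        with A obtain q where q: "q \<in> set ps" "b (Var q)" "\<not> v q" by auto
        have qx: "q \<notin> set xs" using XX q by auto
        have "BI q \<in> set ?Fs" using q qx by auto
        then have "peval v b (BI q)" using A by blast
        moreover have "\<forall>j\<in>set ps. b (Var j) \<longrightarrow> b (Box (Var j))"
        proof
          fix j assume "j \<in> set ps"
          then have "Imp (Box (Var j)) (Box (Box (Var j))) \<in> set ?Fs" by simp
          then show "b (Var j) \<longrightarrow> b (Box (Var j))" using A by (metis peval.simps(3) peval.simps(4))
        qed
        moreover have "\<forall>a\<in>set (map Box (map Var (q # xs) @ map (\<lambda>j. Box (Var j)) (q # xs))). peval v b a"
        proof
          fix a assume "a \<in> set (map Box (map Var (q # xs) @ map (\<lambda>j. Box (Var j)) (q # xs)))"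
          then obtain j where j: "j \<in> set (q # xs)" "a = Box (Var j) \<or> a = Box (Box (Var j))" by auto
          have jp: "j \<in> set ps" using j(1) q(1) Suc.prems(1) by auto
          have "b (Var j)" using j(1) q(2) XX by auto
          moreover have "b (Box (Var j))" using calculation jp \<open>\<forall>j\<in>set ps. b (Var j) \<longrightarrow> b (Box (Var j))\<close> by blast
          ultimately show "peval v b a" using j(2) by auto
        qed
        ultimately have "b (Q (Suc m) (Var p))"
          unfolding BI_def peval_Imps peval.simps(4) by blast
        then show ?thesis by simp
      qed
    qed
  qed
qed

lemma negQ: "\<not> peval v b P \<Longrightarrow> (\<forall>i\<in>{1..<k}. b (Q i P) \<longrightarrow> peval v b (Q i P)) \<Longrightarrow> k \<ge> 1
  \<Longrightarrow> \<not> peval v b (Q k P)"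
proof (induction k)
  case 0 then show ?case by simp
next
  case (Suc k)
  show ?case
  proof (cases k)
    case 0 then show ?thesis using Suc by simp
  next
    case (Suc k')
    have "\<not> peval v b (Q k P)" using Suc.IH Suc.prems \<open>k = Suc k'\<close> by auto
    moreover have "b (Q k P) \<longrightarrow> peval v b (Q k P)" using Suc.prems \<open>k = Suc k'\<close> by auto
    ultimately show ?thesis using Suc.prems \<open>k = Suc k'\<close> by simp
  qed
qed

lemma posQ: "peval v b P \<Longrightarrow> (k::nat) \<ge> 1 \<Longrightarrow> peval v b (Q k P)"
proof -
  assume a: "peval v b P" "k \<ge> 1"
  then obtain j where "k = Suc j" by (cases k) auto
  then show ?thesis using a by (cases j) auto
qed

theorem mainTheorem11:
  fixes p :: nat and ps :: "nat list"
  assumes "length ps \<ge> 1" and "distinct ps" and "p \<notin> set ps"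
  shows "GL_der {Imp (BigAnd (map (\<lambda>q. Imp (Box (Var q)) (Var q)) ps)) (Var p)}
           (Iff (Qn (length ps) (Var p)) (Var p))"
proof -
  let ?G = "{Imp (BigAnd (map (\<lambda>q. Imp (Box (Var q)) (Var q)) ps)) (Var p)}"
  have c: "GL_der ?G (Q (Suc (length ps)) (Var p))"
    using claim[of ps p ?G "[]" "length ps"] by (simp add: card_length)
  show ?thesis
  proof (rule derive_taut[where Fs="[Q (Suc (length ps)) (Var p)]"])
    show "\<forall>f\<in>set [Q (Suc (length ps)) (Var p)]. GL_der ?G f" using c by simp
  next
    fix v b
    assume A: "\<forall>f\<in>set [Q (Suc (length ps)) (Var p)]. peval v b f"
    show "peval v b (Iff (Qn (length ps) (Var p)) (Var p))"
    proof (cases "v p")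
      case True
      then show ?thesis using posQ[of v b "Var p"] by (auto simp: Qn_def)
    next
      case False
      have "\<not> peval v b (Qn (length ps) (Var p))"
      proof
        assume "peval v b (Qn (length ps) (Var p))"
        then have "\<forall>i\<in>{1..<Suc (length ps)}. b (Q i (Var p)) \<longrightarrow> peval v b (Q i (Var p))"
          by (auto simp: Qn_def)
        then have "\<not> peval v b (Q (Suc (length ps)) (Var p))"
          using negQ[of v b "Var p" "Suc (length ps)"] False by auto
        then show False using A by simp
      qed
      then show ?thesis using False by simp
    qed
  qed
qed

end
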